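(* Let $L=\mathcal{F}(P)$ be a finite distributive lattice and let $K$ be a cutting of $L$. Then for all $k$, $$d_k((L\boxplus K)\boxplus K)=d_k(L\boxplus K)+d_{k-2}(K)$$ and $$d_k^-(L\boxplus K)=d_k^-(L)+d_{k-1}^-(K).$$
   Context: For a finite poset $P$, $\mathcal{F}(P)$ is the set of filters (up-sets) of $P$ ordered by reverse inclusion; every finite distributive lattice is isomorphic to some $\mathcal{F}(P)$. A cutting of a finite distributive lattice $L$ is an interval $K=[\hat0_K,\hat1_K]$ of $L$ such that every maximal chain of $L$ meets $K$. For a cutting $K$ of $L=\mathcal{F}(P)$, let $S=\hat0_K\setminus\hat1_K$, $S_0$ the set of maximal elements of $P\setminus\hat0_K$, $S_1$ the set of minimal elements of $\hat1_K$. The poset $P_K$ is $P\cup\{x_K\}$ ($x_K$ new) where the order on $P$ is unchanged, $z<x_K$ iff $z\le s$ for some $s\in S_0$, $x_K<y$ iff $y\ge s$ for some $s\in S_1$, and $x_K$ is incomparable to every element of $S$; the convex expansion is $L\boxplus K:=\mathcal{F}(P_K)$. The lattice $(L\boxplus K)\boxplus K$ is the expansion of $L\boxplus K$ by the copy of $K$ in it, namely $\mathcal{F}(P')$ where $P'=P\cup\{x_1,x_2\}$ ($x_1,x_2$ new) with the order of $P$ unchanged, $x_1<x_2$, $z<x_1$ iff $z\le s$ for some $s\in S_0$, $x_2<y$ iff $y\ge s$ for some $s\in S_1$ (and then $z<x_2$, $x_1<y$ accordingly), and $x_1,x_2$ incomparable to every element of $S$. For a finite lattice $M$ and $a\in M$: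 $\deg^-_M(a)$ is the number of elements covering $a$, $\deg^+_M(a)$ the number of elements covered by $a$, $\deg_M(a)=\deg^-_M(a)+\deg^+_M(a)$; $d_k^-(M)$ (resp. $d_k(M)$) is the number of $a\in M$ with $\deg^-_M(a)=k$ (resp. $\deg_M(a)=k$), and these are $0$ for negative $k$. *)

theory Defs
  imports Main
begin

definition partial_order_on' :: "'a set \<Rightarrow> ('a \<Rightarrow> 'a \<Rightarrow> bool) \<Rightarrow> bool" where
  "partial_order_on' P le \<longleftrightarrow>
     (\<forall>x\<in>P. le x x) \<and>
     (\<forall>x\<in>P. \<forall>y\<in>P. le x y \<and> le y x \<longrightarrow> x = y) \<and>
     (\<forall>x\<in>P. \<forall>y\<in>P. \<forall>z\<in>P. le x y \<and> le y z \<longrightarrow> le x z)"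

definition filters :: "'a set \<Rightarrow> ('a \<Rightarrow> 'a \<Rightarrow> bool) \<Rightarrow> 'a set set" where
  "filters P le = {F. F \<subseteq> P \<and> (\<forall>x\<in>F. \<forall>y\<in>P. le x y \<longrightarrow> y \<in> F)}"

text \<open>The order of F(P): reverse inclusion.\<close>
definition rev_incl :: "'a set \<Rightarrow> 'a set \<Rightarrow> bool" where
  "rev_incl A B \<longleftrightarrow> B \<subseteq> A"

definition covers :: "'b set \<Rightarrow> ('b \<Rightarrow> 'b \<Rightarrow> bool) \<Rightarrow> 'b \<Rightarrow> 'b \<Rightarrow> bool" where
  "covers M le a b \<longleftrightarrow> a \<in> M \<and> b \<in> M \<and> le a b \<and> a \<noteq> b \<and>
     \<not> (\<exists>c\<in>M. le a c \<and> le c b \<and> c \<noteq> a \<and> c \<noteq> b)"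

definition deg_minus :: "'b set \<Rightarrow> ('b \<Rightarrow> 'b \<Rightarrow> bool) \<Rightarrow> 'b \<Rightarrow> nat" where
  "deg_minus M le a = card {b\<in>M. covers M le a b}"

definition deg_plus :: "'b set \<Rightarrow> ('b \<Rightarrow> 'b \<Rightarrow> bool) \<Rightarrow> 'b \<Rightarrow> nat" where
  "deg_plus M le a = card {b\<in>M. covers M le b a}"

definition deg :: "'b set \<Rightarrow> ('b \<Rightarrow> 'b \<Rightarrow> bool) \<Rightarrow> 'b \<Rightarrow> nat" where
  "deg M le a = deg_minus M le a + deg_plus M le a"

text \<open>d_k and d_k^-; indexed by integers, automatically 0 for negative k.\<close>
definition d_num :: "'b set \<Rightarrow> ('b \<Rightarrow> 'b \<Rightarrow> bool) \<Rightarrow> int \<Rightarrow> nat" where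
  "d_num M le k = card {a\<in>M. int (deg M le a) = k}"

definition d_minus_num :: "'b set \<Rightarrow> ('b \<Rightarrow> 'b \<Rightarrow> bool) \<Rightarrow> int \<Rightarrow> nat" where
  "d_minus_num M le k = card {a\<in>M. int (deg_minus M le a) = k}"

definition is_chain :: "'b set \<Rightarrow> ('b \<Rightarrow> 'b \<Rightarrow> bool) \<Rightarrow> 'b set \<Rightarrow> bool" where
  "is_chain M le C \<longleftrightarrow> C \<subseteq> M \<and> (\<forall>x\<in>C. \<forall>y\<in>C. le x y \<or> le y x)"

definition maximal_chain :: "'b set \<Rightarrow> ('b \<Rightarrow> 'b \<Rightarrow> bool) \<Rightarrow> 'b set \<Rightarrow> bool" where
  "maximal_chain M le C \<longleftrightarrow> is_chain M le C \<and> (\<forall>D. is_chain M le D \<and> C \<subseteq> D \<longrightarrow> D = C)"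

text \<open>The interval [lo, hi] of F(P) (lo = 0_K, hi = 1_K).\<close>
definition interval_F :: "'a set \<Rightarrow> ('a \<Rightarrow> 'a \<Rightarrow> bool) \<Rightarrow> 'a set \<Rightarrow> 'a set \<Rightarrow> 'a set set" where
  "interval_F P le lo hi = {F \<in> filters P le. rev_incl lo F \<and> rev_incl F hi}"

definition cutting :: "'a set \<Rightarrow> ('a \<Rightarrow> 'a \<Rightarrow> bool) \<Rightarrow> 'a set \<Rightarrow> 'a set \<Rightarrow> bool" where
  "cutting P le lo hi \<longleftrightarrow> lo \<in> filters P le \<and> hi \<in> filters P le \<and> rev_incl lo hi \<and>
     (\<forall>C. maximal_chain (filters P le) rev_incl C \<longrightarrow> C \<inter> interval_F P le lo hi \<noteq> {})"

definition S0 :: "'a set \<Rightarrow> ('a \<Rightarrow> 'a \<Rightarrow> bool) \<Rightarrow> 'a set \<Rightarrow> 'a set" where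
  "S0 P le lo = {x \<in> P - lo. \<forall>y\<in>P - lo. le x y \<longrightarrow> y = x}"

definition S1 :: "'a set \<Rightarrow> ('a \<Rightarrow> 'a \<Rightarrow> bool) \<Rightarrow> 'a set \<Rightarrow> 'a set" where
  "S1 P le hi = {x \<in> hi. \<forall>y\<in>hi. le y x \<longrightarrow> y = x}"

text \<open>P_K on type 'a option: Some p is p, None is the new element x_K.\<close>
definition PK :: "'a set \<Rightarrow> 'a option set" where
  "PK P = Some ` P \<union> {None}"

fun leK :: "'a set \<Rightarrow> ('a \<Rightarrow> 'a \<Rightarrow> bool) \<Rightarrow> 'a set \<Rightarrow> 'a set \<Rightarrow> 'a option \<Rightarrow> 'a option \<Rightarrow> bool" where
  "leK P le lo hi (Some a) (Some b) = le a b"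
| "leK P le lo hi (Some a) None = (\<exists>s\<in>S0 P le lo. le a s)"
| "leK P le lo hi None (Some b) = (\<exists>s\<in>S1 P le hi. le s b)"
| "leK P le lo hi None None = True"

text \<open>P' for the double expansion: Old p is p, X1, X2 are the new elements x_1 < x_2.\<close>
datatype 'a ext2 = Old 'a | X1 | X2

definition P2 :: "'a set \<Rightarrow> 'a ext2 set" where
  "P2 P = Old ` P \<union> {X1, X2}"

fun le2 :: "'a set \<Rightarrow> ('a \<Rightarrow> 'a \<Rightarrow> bool) \<Rightarrow> 'a set \<Rightarrow> 'a set \<Rightarrow> 'a ext2 \<Rightarrow> 'a ext2 \<Rightarrow> bool" where
  "le2 P le lo hi (Old a) (Old b) = le a b"
| "le2 P le lo hi (Old a) X1 = (\<exists>s\<in>S0 P le lo. le a s)"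
| "le2 P le lo hi (Old a) X2 = (\<exists>s\<in>S0 P le lo. le a s)"
| "le2 P le lo hi X1 (Old b) = (\<exists>s\<in>S1 P le hi. le s b)"
| "le2 P le lo hi X2 (Old b) = (\<exists>s\<in>S1 P le hi. le s b)"
| "le2 P le lo hi X1 X1 = True"
| "le2 P le lo hi X1 X2 = True"
| "le2 P le lo hi X2 X1 = False"
| "le2 P le lo hi X2 X2 = True"

end

theory Submission imports Defs begin

lemma po_minimal:
  assumes po: "partial_order_on' P le" and fin: "finite X" and XP: "X \<subseteq> P" and x: "x \<in> X"
  shows "\<exists>m\<in>X. le m x \<and> (\<forall>y\<in>X. le y m \<longrightarrow> y = m)"
proof -
  obtain m where m: "m \<in> X \<and> le m x"
    and least: "\<And>z. z \<in> X \<and> le z x \<Longrightarrow> card {y\<in>X. le y m} \<le> card {y\<in>X. le y z}"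
    using ex_has_least_nat[of "\<lambda>m. m \<in> X \<and> le m x" x "\<lambda>m. card {y\<in>X. le y m}"] x po
    unfolding partial_order_on'_def using XP by blast
  have "\<forall>y\<in>X. le y m \<longrightarrow> y = m"
  proof (intro ballI impI, rule ccontr)
    fix y assume y: "y \<in> X" "le y m" "y \<noteq> m"
    have yx: "le y x" using po y m XP x unfolding partial_order_on'_def by blast
    have sub: "{z\<in>X. le z y} \<subset> {z\<in>X. le z m}"
    proof
      show "{z\<in>X. le z y} \<subseteq> {z\<in>X. le z m}" using po y m XP unfolding partial_order_on'_def by blast
      have "m \<notin> {z\<in>X. le z y}" using po y m XP unfolding partial_order_on'_def by blast
      moreover have "m \<in> {z\<in>X. le z m}" using po m XP unfolding partial_order_on'_def by blast
      ultimately show "{z\<in>X. le z y} \<noteq> {z\<in>X. le z m}" by blast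
    qed
    have "card {z\<in>X. le z y} < card {z\<in>X. le z m}"
      using psubset_card_mono[OF _ sub] fin by simp
    moreover have "card {z\<in>X. le z m} \<le> card {z\<in>X. le z y}" using least[of y] y yx by blast
    ultimately show False by simp
  qed
  then show ?thesis using m by blast
qed

lemma po_converse: "partial_order_on' P le \<Longrightarrow> partial_order_on' P (\<lambda>a b. le b a)"
  unfolding partial_order_on'_def by blast

lemma po_maximal:
  assumes po: "partial_order_on' P le" and fin: "finite X" and XP: "X \<subseteq> P" and x: "x \<in> X"
  shows "\<exists>m\<in>X. le x m \<and> (\<forall>y\<in>X. le m y \<longrightarrow> y = m)"
  using po_minimal[OF po_converse[OF po] fin XP x] by blast

lemma step_lemma:
  assumes fin: "finite Q" and po: "partial_order_on' Q R"
    and a: "a \<in> filters Q R" and b: "b \<in> filters Q R" and ba: "b \<subset> a"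
  shows "\<exists>m\<in>a - b. a - {m} \<in> filters Q R"
proof -
  have aQ: "a \<subseteq> Q" using a unfolding filters_def by blast
  obtain x where x: "x \<in> a - b" using ba by blast
  have "finite (a - b)" using aQ fin finite_subset by blast
  then obtain m where m: "m \<in> a - b" and mmin: "\<forall>y\<in>a - b. R y m \<longrightarrow> y = m"
    using po_minimal[OF po _ _ x] aQ by blast
  have "a - {m} \<in> filters Q R"
    unfolding filters_def
  proof (intro CollectI conjI ballI impI)
    show "a - {m} \<subseteq> Q" using aQ by blast
    fix u v assume u: "u \<in> a - {m}" and v: "v \<in> Q" and uv: "R u v"
    have "v \<in> a" using a u v uv unfolding filters_def by blast
    moreover have "v \<noteq> m"
    proof
      assume "v = m"
      then have "u \<notin> b" using b m u v uv unfolding filters_def by blast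
      then show False using mmin u uv \<open>v = m\<close> by blast
    qed
    ultimately show "v \<in> a - {m}" by blast
  qed
  then show ?thesis using m by blast
qed

definition convex_fam :: "'a set \<Rightarrow> ('a \<Rightarrow> 'a \<Rightarrow> bool) \<Rightarrow> 'a set set \<Rightarrow> bool" where
  "convex_fam Q R M \<longleftrightarrow> M \<subseteq> filters Q R \<and>
     (\<forall>a\<in>M. \<forall>b\<in>M. \<forall>c\<in>filters Q R. b \<subseteq> c \<and> c \<subseteq> a \<longrightarrow> c \<in> M)"

lemma covers_char:
  assumes fin: "finite Q" and po: "partial_order_on' Q R" and cv: "convex_fam Q R M"
  shows "covers M rev_incl a b \<longleftrightarrow> a \<in> M \<and> b \<in> M \<and> (\<exists>m\<in>a. b = a - {m})"
proof
  assume c: "covers M rev_incl a b"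
  have ab0: "a \<in> M \<and> b \<in> M \<and> b \<subset> a" using c unfolding covers_def rev_incl_def by blast
  then have ab: "a \<in> M" "b \<in> M" "b \<subset> a" by simp_all
  have MF: "M \<subseteq> filters Q R" and cvx: "\<forall>a\<in>M. \<forall>b\<in>M. \<forall>c\<in>filters Q R. b \<subseteq> c \<and> c \<subseteq> a \<longrightarrow> c \<in> M"
    using cv[unfolded convex_fam_def] by (rule conjunct1, rule conjunct2)
  have "a \<in> filters Q R" "b \<in> filters Q R" using ab MF by auto
  then obtain m where m: "m \<in> a - b" "a - {m} \<in> filters Q R" using step_lemma[OF fin po _ _ ab(3)] by blast
  have sub: "b \<subseteq> a - {m}" "a - {m} \<subseteq> a" using m ab by auto
  have amM: "a - {m} \<in> M" using cvx ab(1,2) m(2) sub by blast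
  have nb: "\<not> (\<exists>c\<in>M. b \<subseteq> c \<and> c \<subseteq> a \<and> c \<noteq> a \<and> c \<noteq> b)"
    using c unfolding covers_def rev_incl_def by blast
  have "a - {m} \<noteq> a" using m by blast
  then have "b = a - {m}" using nb amM sub by blast
  then show "a \<in> M \<and> b \<in> M \<and> (\<exists>m\<in>a. b = a - {m})" using ab m by blast
next
  assume "a \<in> M \<and> b \<in> M \<and> (\<exists>m\<in>a. b = a - {m})"
  then show "covers M rev_incl a b" unfolding covers_def rev_incl_def by blast
qed

lemma deg_minus_char:
  assumes fin: "finite Q" and po: "partial_order_on' Q R" and cv: "convex_fam Q R M" and a: "a \<in> M"
  shows "deg_minus M rev_incl a = card {m\<in>a. a - {m} \<in> M}"
proof -
  have "{b\<in>M. covers M rev_incl a b} = (\<lambda>m. a - {m}) ` {m\<in>a. a - {m} \<in> M}"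
    using covers_char[OF fin po cv] a by auto
  moreover have "inj_on (\<lambda>m. a - {m}) {m\<in>a. a - {m} \<in> M}"
    by (rule inj_onI) blast
  ultimately show ?thesis unfolding deg_minus_def by (simp add: card_image)
qed

lemma deg_plus_char:
  assumes fin: "finite Q" and po: "partial_order_on' Q R" and cv: "convex_fam Q R M" and a: "a \<in> M"
  shows "deg_plus M rev_incl a = card {m\<in>Q - a. insert m a \<in> M}"
proof -
  have MQ: "\<And>X. X \<in> M \<Longrightarrow> X \<subseteq> Q" using cv unfolding convex_fam_def filters_def by blast
  have "{b\<in>M. covers M rev_incl b a} = (\<lambda>m. insert m a) ` {m\<in>Q - a. insert m a \<in> M}"
  proof (rule set_eqI, rule iffI)
    fix b assume "b \<in> {b\<in>M. covers M rev_incl b a}"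
    then have bM: "b \<in> M" and cb: "covers M rev_incl b a" by auto
    have "b \<in> M \<and> a \<in> M \<and> (\<exists>m\<in>b. a = b - {m})" using covers_char[OF fin po cv, of b a, THEN iffD1, OF cb] .
    then obtain m where m: "m \<in> b" "a = b - {m}" by blast
    then have "b = insert m a" by blast
    moreover have "m \<in> Q - a" using m MQ[OF bM] by blast
    ultimately show "b \<in> (\<lambda>m. insert m a) ` {m\<in>Q - a. insert m a \<in> M}" using bM by blast
  next
    fix b assume "b \<in> (\<lambda>m. insert m a) ` {m\<in>Q - a. insert m a \<in> M}"
    then obtain m where "m \<in> Q - a" "b = insert m a" "b \<in> M" by blast
    then have "b \<in> M \<and> a \<in> M \<and> (\<exists>m\<in>b. a = b - {m})" using a by blast
    then have "covers M rev_incl b a" using covers_char[OF fin po cv, of b a, THEN iffD2] by blast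
    then show "b \<in> {b\<in>M. covers M rev_incl b a}" using \<open>b \<in> M\<close> by blast
  qed
  moreover have "inj_on (\<lambda>m. insert m a) {m\<in>Q - a. insert m a \<in> M}"
    by (rule inj_onI) blast
  ultimately show ?thesis unfolding deg_plus_def by (simp add: card_image)
qed

lemma card_two_images:
  assumes "inj_on f X" "inj_on g Y" "f ` X \<inter> g ` Y = {}" "finite X" "finite Y"
  shows "card {a \<in> f ` X \<union> g ` Y. Q a} = card {x\<in>X. Q (f x)} + card {y\<in>Y. Q (g y)}"
proof -
  have e: "{a \<in> f ` X \<union> g ` Y. Q a} = f ` {x\<in>X. Q (f x)} \<union> g ` {y\<in>Y. Q (g y)}" by auto
  have "card (f ` {x\<in>X. Q (f x)} \<union> g ` {y\<in>Y. Q (g y)}) = card (f ` {x\<in>X. Q (f x)}) + card (g ` {y\<in>Y. Q (g y)})"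
    by (rule card_Un_disjoint) (use assms in auto)
  also have "\<dots> = card {x\<in>X. Q (f x)} + card {y\<in>Y. Q (g y)}"
  proof -
    have "inj_on f {x\<in>X. Q (f x)}" using assms(1) by (rule inj_on_subset) blast
    moreover have "inj_on g {y\<in>Y. Q (g y)}" using assms(2) by (rule inj_on_subset) blast
    ultimately show ?thesis by (simp only: card_image)
  qed
  finally show ?thesis unfolding e .
qed


locale cutset =
  fixes P :: "'a set" and le :: "'a \<Rightarrow> 'a \<Rightarrow> bool" and lo hi :: "'a set"
  assumes finP: "finite P" and po: "partial_order_on' P le" and cut: "cutting P le lo hi"
begin

abbreviation "L \<equiv> filters P le"
abbreviation "A \<equiv> {F\<in>L. F \<subseteq> lo}"
abbreviation "B \<equiv> {F\<in>L. hi \<subseteq> F}"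
abbreviation "K \<equiv> interval_F P le lo hi"
abbreviation "LK \<equiv> filters (PK P) (leK P le lo hi)"
abbreviation "L2 \<equiv> filters (P2 P) (le2 P le lo hi)"

lemma refl: "x \<in> P \<Longrightarrow> le x x" using po unfolding partial_order_on'_def by blast
lemma antisym: "x \<in> P \<Longrightarrow> y \<in> P \<Longrightarrow> le x y \<Longrightarrow> le y x \<Longrightarrow> x = y"
  using po unfolding partial_order_on'_def by blast
lemma trans: "x \<in> P \<Longrightarrow> y \<in> P \<Longrightarrow> z \<in> P \<Longrightarrow> le x y \<Longrightarrow> le y z \<Longrightarrow> le x z"
  using po unfolding partial_order_on'_def by blast

lemma lo_L: "lo \<in> L" and hi_L: "hi \<in> L" and hi_lo: "hi \<subseteq> lo"
  using cut unfolding cutting_def rev_incl_def by auto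

lemma loP: "lo \<subseteq> P" and hiP: "hi \<subseteq> P" using lo_L hi_L unfolding filters_def by auto

lemma lo_up: "x \<in> lo \<Longrightarrow> y \<in> P \<Longrightarrow> le x y \<Longrightarrow> y \<in> lo"
  using lo_L unfolding filters_def by blast
lemma hi_up: "x \<in> hi \<Longrightarrow> y \<in> P \<Longrightarrow> le x y \<Longrightarrow> y \<in> hi"
  using hi_L unfolding filters_def by blast

lemma K_eq: "K = A \<inter> B"
  unfolding interval_F_def rev_incl_def by auto

lemma S0_iff: "x \<in> P \<Longrightarrow> (\<exists>s\<in>S0 P le lo. le x s) \<longleftrightarrow> x \<notin> lo"
proof
  assume x: "x \<in> P" and "\<exists>s\<in>S0 P le lo. le x s"
  then obtain s where s: "s \<in> P - lo" "le x s" unfolding S0_def by blast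
  then show "x \<notin> lo" using lo_up x by blast
next
  assume x: "x \<in> P" "x \<notin> lo"
  have "finite (P - lo)" using finP by simp
  then obtain m where "m \<in> P - lo" "le x m" "\<forall>y\<in>P - lo. le m y \<longrightarrow> y = m"
    using po_maximal[OF po _ _, of "P - lo" x] x by blast
  then show "\<exists>s\<in>S0 P le lo. le x s" unfolding S0_def by blast
qed

lemma S1_iff: "y \<in> P \<Longrightarrow> (\<exists>s\<in>S1 P le hi. le s y) \<longleftrightarrow> y \<in> hi"
proof
  assume y: "y \<in> P" and "\<exists>s\<in>S1 P le hi. le s y"
  then obtain s where s: "s \<in> hi" "le s y" unfolding S1_def by blast
  then show "y \<in> hi" using hi_up y by blast
next
  assume y: "y \<in> P" "y \<in> hi"
  have "finite hi" using finP hiP finite_subset by blast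
  then obtain m where "m \<in> hi" "le m y" "\<forall>z\<in>hi. le z m \<longrightarrow> z = m"
    using po_minimal[OF po _ hiP, of y] y by blast
  then show "\<exists>s\<in>S1 P le hi. le s y" unfolding S1_def by blast
qed

lemma exists_max_chain:
  assumes F: "F \<in> L"
  shows "\<exists>C. maximal_chain L rev_incl C \<and> F \<in> C"
proof -
  let ?X = "{C. is_chain L rev_incl C \<and> F \<in> C}"
  have fin: "finite ?X"
  proof (rule finite_subset)
    show "?X \<subseteq> Pow L" unfolding is_chain_def by blast
    have "L \<subseteq> Pow P" unfolding filters_def by blast
    then show "finite (Pow L)" using finP by (meson finite_Pow_iff finite_subset)
  qed
  have F1: "{F} \<in> ?X" using F by (simp add: is_chain_def rev_incl_def)
  obtain C where C1: "C \<in> ?X" and C2: "{F} \<le> C \<and> (\<forall>D\<in>?X. C \<le> D \<longrightarrow> C = D)"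
    using finite_has_maximal2[OF fin F1] by (rule bexE)
  have C: "C \<in> ?X" "\<forall>D\<in>?X. C \<subseteq> D \<longrightarrow> D = C" using C1 C2 by auto
  have "\<forall>D. is_chain L rev_incl D \<and> C \<subseteq> D \<longrightarrow> D = C"
  proof (intro allI impI)
    fix D assume D: "is_chain L rev_incl D \<and> C \<subseteq> D"
    then have "D \<in> ?X" using C(1) by blast
    then show "D = C" using C(2) D by blast
  qed
  then have "maximal_chain L rev_incl C" using C(1) unfolding maximal_chain_def by blast
  then show ?thesis using C(1) by blast
qed

lemma cut_fact:
  assumes z: "z \<in> P - lo" and y: "y \<in> hi"
  shows "le z y"
proof (rule ccontr)
  assume nzy: "\<not> le z y"
  let ?F = "{w\<in>P. le z w}"
  have F: "?F \<in> L" unfolding filters_def using trans z by blast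
  obtain C where C: "maximal_chain L rev_incl C" "?F \<in> C" using exists_max_chain[OF F] by blast
  have "C \<inter> K \<noteq> {}" using cut C(1) unfolding cutting_def by blast
  then obtain G where G: "G \<in> C" "G \<in> K" by auto
  have "is_chain L rev_incl C" using C(1) unfolding maximal_chain_def by (rule conjunct1)
  then have "\<forall>x\<in>C. \<forall>y\<in>C. rev_incl x y \<or> rev_incl y x" unfolding is_chain_def by (rule conjunct2)
  then have "rev_incl G ?F \<or> rev_incl ?F G" using G(1) C(2) by blast
  then have "G \<subseteq> ?F \<or> ?F \<subseteq> G" unfolding rev_incl_def by blast
  moreover have "G \<subseteq> lo" "hi \<subseteq> G" using G unfolding interval_F_def rev_incl_def by auto
  moreover have "z \<in> ?F" using z refl by blast
  moreover have "y \<notin> ?F" using nzy by blast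
  ultimately show False using z y by blast
qed

lemma L_split: "F \<in> L \<Longrightarrow> F \<subseteq> lo \<or> hi \<subseteq> F"
proof (rule ccontr)
  assume F: "F \<in> L" and "\<not> (F \<subseteq> lo \<or> hi \<subseteq> F)"
  then obtain z y where "z \<in> F" "z \<notin> lo" "y \<in> hi" "y \<notin> F" by blast
  moreover have "z \<in> P" "y \<in> P" using F \<open>z \<in> F\<close> \<open>y \<in> hi\<close> hiP unfolding filters_def by auto
  ultimately show False using cut_fact F unfolding filters_def by blast
qed

end
declare leK.simps(2,3)[simp del] le2.simps(2,3,4,5)[simp del]
context cutset begin

lemma leK_SN[simp]: "a \<in> P \<Longrightarrow> leK P le lo hi (Some a) None \<longleftrightarrow> a \<notin> lo"
  using S0_iff by (simp add: leK.simps le2.simps)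
lemma leK_NS[simp]: "b \<in> P \<Longrightarrow> leK P le lo hi None (Some b) \<longleftrightarrow> b \<in> hi"
  using S1_iff by (simp add: leK.simps le2.simps)
lemma le2_O1[simp]: "a \<in> P \<Longrightarrow> le2 P le lo hi (Old a) X1 \<longleftrightarrow> a \<notin> lo"
  using S0_iff by (simp add: leK.simps le2.simps)
lemma le2_O2[simp]: "a \<in> P \<Longrightarrow> le2 P le lo hi (Old a) X2 \<longleftrightarrow> a \<notin> lo"
  using S0_iff by (simp add: leK.simps le2.simps)
lemma le2_1O[simp]: "b \<in> P \<Longrightarrow> le2 P le lo hi X1 (Old b) \<longleftrightarrow> b \<in> hi"
  using S1_iff by (simp add: leK.simps le2.simps)
lemma le2_2O[simp]: "b \<in> P \<Longrightarrow> le2 P le lo hi X2 (Old b) \<longleftrightarrow> b \<in> hi"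
  using S1_iff by (simp add: leK.simps le2.simps)

lemma hi_not_below: "b \<in> hi \<Longrightarrow> b \<in> lo" using hi_lo by blast

lemma po_K: "partial_order_on' (PK P) (leK P le lo hi)"
  unfolding partial_order_on'_def
proof (intro conjI ballI impI)
  fix x assume "x \<in> PK P" then show "leK P le lo hi x x"
    unfolding PK_def using refl by (cases x) auto
next
  fix x y assume x: "x \<in> PK P" and y: "y \<in> PK P" and xy: "leK P le lo hi x y \<and> leK P le lo hi y x"
  show "x = y"
  proof (cases x; cases y)
    fix a b assume "x = Some a" "y = Some b" then show "x = y" using x y xy antisym unfolding PK_def by auto
  next
    fix a assume "x = Some a" "y = None" then show "x = y" using x y xy hi_lo unfolding PK_def by auto
  next
    fix b assume "x = None" "y = Some b" then show "x = y" using x y xy hi_lo unfolding PK_def by auto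
  qed simp
next
  fix x y z assume x: "x \<in> PK P" and y: "y \<in> PK P" and z: "z \<in> PK P"
    and xyz: "leK P le lo hi x y \<and> leK P le lo hi y z"
  have xP: "\<And>a. x = Some a \<Longrightarrow> a \<in> P" using x unfolding PK_def by auto
  have yP: "\<And>a. y = Some a \<Longrightarrow> a \<in> P" using y unfolding PK_def by auto
  have zP: "\<And>a. z = Some a \<Longrightarrow> a \<in> P" using z unfolding PK_def by auto
  show "leK P le lo hi x z"
  proof (cases x)
    case None note xN = this
    show ?thesis
    proof (cases z)
      case (Some c)
      then show ?thesis using xN xyz xP yP zP hi_up by (cases y) auto
    qed (simp add: xN)
  next
    case (Some a) note xS = this
    show ?thesis
    proof (cases z)
      case None
      then show ?thesis using xS xyz xP yP zP lo_up hi_lo by (cases y) auto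
    next
      case (Some c) note zS = this
      show ?thesis
      proof (cases y)
        case None
        have aP: "a \<in> P" and cP: "c \<in> P" using xP xS zP zS by auto
        then have "a \<notin> lo" "c \<in> hi" using xyz xS zS None by auto
        then have "le a c" using cut_fact aP by blast
        then show ?thesis using xS zS by simp
      next
        case (Some b)
        have "a \<in> P" "b \<in> P" "c \<in> P" using xP xS yP Some zP zS by auto
        moreover have "le a b" "le b c" using xyz xS Some zS by auto
        ultimately have "le a c" using trans by blast
        then show ?thesis using xS zS by simp
      qed
    qed
  qed
qed

lemma po_2: "partial_order_on' (P2 P) (le2 P le lo hi)"
  unfolding partial_order_on'_def
proof (intro conjI ballI impI)
  fix x assume "x \<in> P2 P" then show "le2 P le lo hi x x"
    unfolding P2_def using refl by (cases x) auto
next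
  fix x y assume x: "x \<in> P2 P" and y: "y \<in> P2 P" and xy: "le2 P le lo hi x y \<and> le2 P le lo hi y x"
  have xP: "\<And>a. x = Old a \<Longrightarrow> a \<in> P" using x unfolding P2_def by auto
  have yP: "\<And>a. y = Old a \<Longrightarrow> a \<in> P" using y unfolding P2_def by auto
  show "x = y"
    using xy xP yP hi_lo by (cases x; cases y) (simp_all, (blast intro: antisym)+)
next
  fix x y z assume x: "x \<in> P2 P" and y: "y \<in> P2 P" and z: "z \<in> P2 P"
    and xyz: "le2 P le lo hi x y \<and> le2 P le lo hi y z"
  have xP: "\<And>a. x = Old a \<Longrightarrow> a \<in> P" using x unfolding P2_def by auto
  have yP: "\<And>a. y = Old a \<Longrightarrow> a \<in> P" using y unfolding P2_def by auto
  have zP: "\<And>a. z = Old a \<Longrightarrow> a \<in> P" using z unfolding P2_def by auto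
  show "le2 P le lo hi x z"
    using xyz xP yP zP hi_lo by (cases x; cases y; cases z) (simp_all, (blast intro: trans cut_fact lo_up hi_up)+)
qed

end
lemma opt_split1: "None \<in> X \<Longrightarrow> X = insert None (Some ` (Some -` X))"
proof (rule set_eqI)
  fix x assume "None \<in> X" then show "x \<in> X \<longleftrightarrow> x \<in> insert None (Some ` (Some -` X))"
    by (cases x) auto
qed

lemma opt_split2: "None \<notin> X \<Longrightarrow> X = Some ` (Some -` X)"
proof (rule set_eqI)
  fix x assume "None \<notin> X" then show "x \<in> X \<longleftrightarrow> x \<in> Some ` (Some -` X)"
    by (cases x) auto
qed

context cutset begin

lemma LK_Some: "Some ` G \<in> LK \<longleftrightarrow> G \<in> A"
proof
  assume H: "Some ` G \<in> LK"
  have GP: "G \<subseteq> P" using H unfolding filters_def PK_def by auto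
  have up: "\<forall>x\<in>G. \<forall>y\<in>P. le x y \<longrightarrow> y \<in> G"
  proof (intro ballI impI)
    fix x y assume "x \<in> G" "y \<in> P" "le x y"
    then have "Some y \<in> Some ` G" using H unfolding filters_def PK_def by force
    then show "y \<in> G" by auto
  qed
  have "G \<subseteq> lo"
  proof
    fix x assume x: "x \<in> G"
    show "x \<in> lo"
    proof (rule ccontr)
      assume "x \<notin> lo"
      then have "leK P le lo hi (Some x) None" using x GP by auto
      then have "None \<in> Some ` G" using H x unfolding filters_def PK_def by blast
      then show False by auto
    qed
  qed
  then show "G \<in> A" using GP up unfolding filters_def by blast
next
  assume G: "G \<in> A"
  then have GP: "G \<subseteq> P" and Glo: "G \<subseteq> lo" and up: "\<forall>x\<in>G. \<forall>y\<in>P. le x y \<longrightarrow> y \<in> G"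
    unfolding filters_def by auto
  show "Some ` G \<in> LK" unfolding filters_def
  proof (intro CollectI conjI ballI impI)
    show "Some ` G \<subseteq> PK P" using GP unfolding PK_def by auto
    fix x y assume x: "x \<in> Some ` G" and y: "y \<in> PK P" and xy: "leK P le lo hi x y"
    then obtain a where a: "x = Some a" "a \<in> G" by auto
    show "y \<in> Some ` G"
    proof (cases y)
      case None
      then have "a \<notin> lo" using xy a GP by auto
      then show ?thesis using a Glo by blast
    next
      case (Some b)
      then have "b \<in> P" using y unfolding PK_def by auto
      then show ?thesis using Some a xy up by auto
    qed
  qed
qed

lemma LK_None: "insert None (Some ` G) \<in> LK \<longleftrightarrow> G \<in> B"
proof
  assume H: "insert None (Some ` G) \<in> LK"
  have GP: "G \<subseteq> P" using H unfolding filters_def PK_def by auto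
  have up: "\<forall>x\<in>G. \<forall>y\<in>P. le x y \<longrightarrow> y \<in> G"
  proof (intro ballI impI)
    fix x y assume "x \<in> G" "y \<in> P" "le x y"
    then have "Some y \<in> insert None (Some ` G)" using H unfolding filters_def PK_def by force
    then show "y \<in> G" by auto
  qed
  have "hi \<subseteq> G"
  proof
    fix x assume x: "x \<in> hi"
    then have xP: "x \<in> P" using hiP by blast
    then have "leK P le lo hi None (Some x)" using x by auto
    then have "Some x \<in> insert None (Some ` G)" using H xP unfolding filters_def PK_def by blast
    then show "x \<in> G" by auto
  qed
  then show "G \<in> B" using GP up unfolding filters_def by blast
next
  assume G: "G \<in> B"
  then have GP: "G \<subseteq> P" and Ghi: "hi \<subseteq> G" and up: "\<forall>x\<in>G. \<forall>y\<in>P. le x y \<longrightarrow> y \<in> G"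
    unfolding filters_def by auto
  show "insert None (Some ` G) \<in> LK" unfolding filters_def
  proof (intro CollectI conjI ballI impI)
    show "insert None (Some ` G) \<subseteq> PK P" using GP unfolding PK_def by auto
    fix x y assume x: "x \<in> insert None (Some ` G)" and y: "y \<in> PK P" and xy: "leK P le lo hi x y"
    show "y \<in> insert None (Some ` G)"
    proof (cases y)
      case None
      then show ?thesis by simp
    next
      case (Some b)
      then have bP: "b \<in> P" using y unfolding PK_def by auto
      show ?thesis
      proof (cases x)
        case None
        then have "b \<in> hi" using xy Some bP by auto
        then show ?thesis using Some Ghi by blast
      next
        case (Some a)
        then have "a \<in> G" using x by auto
        then show ?thesis using Some \<open>y = Some b\<close> xy up bP by auto
      qed
    qed
  qed
qed

lemma LK_decomp: "LK = (\<lambda>G. Some ` G) ` A \<union> (\<lambda>G. insert None (Some ` G)) ` B"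
proof
  show "(\<lambda>G. Some ` G) ` A \<union> (\<lambda>G. insert None (Some ` G)) ` B \<subseteq> LK"
    using LK_Some LK_None by blast
  show "LK \<subseteq> (\<lambda>G. Some ` G) ` A \<union> (\<lambda>G. insert None (Some ` G)) ` B"
  proof
    fix X assume X: "X \<in> LK"
    let ?G = "Some -` X"
    show "X \<in> (\<lambda>G. Some ` G) ` A \<union> (\<lambda>G. insert None (Some ` G)) ` B"
    proof (cases "None \<in> X")
      case True
      then have eq: "X = insert None (Some ` ?G)" by (rule opt_split1)
      have "insert None (Some ` ?G) \<in> LK" using X eq by simp
      then have "?G \<in> B" by (rule LK_None[THEN iffD1])
      then have "X \<in> (\<lambda>G. insert None (Some ` G)) ` B" using eq by (rule image_eqI[rotated])
      then show ?thesis by (rule UnI2)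
    next
      case False
      then have eq: "X = Some ` ?G" by (rule opt_split2)
      have "Some ` ?G \<in> LK" using X eq by simp
      then have "?G \<in> A" by (rule LK_Some[THEN iffD1])
      then have "X \<in> (\<lambda>G. Some ` G) ` A" using eq by (rule image_eqI[rotated])
      then show ?thesis by (rule UnI1)
    qed
  qed
qed

end
context cutset begin

lemma L2_char: "X \<in> L2 \<longleftrightarrow> X \<subseteq> P2 P \<and> Old -` X \<in> L \<and> (X1 \<in> X \<longrightarrow> X2 \<in> X)
   \<and> (X2 \<in> X \<longrightarrow> hi \<subseteq> Old -` X) \<and> (X1 \<notin> X \<longrightarrow> Old -` X \<subseteq> lo)"
  (is "?l \<longleftrightarrow> ?r")
proof
  assume H: ?l
  then have XP: "X \<subseteq> P2 P" and up: "\<And>x y. x \<in> X \<Longrightarrow> y \<in> P2 P \<Longrightarrow> le2 P le lo hi x y \<Longrightarrow> y \<in> X"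
    unfolding filters_def by auto
  have GP: "Old -` X \<subseteq> P" using XP unfolding P2_def by auto
  have "Old -` X \<in> L" unfolding filters_def
  proof (intro CollectI conjI ballI impI)
    show "Old -` X \<subseteq> P" by (rule GP)
    fix x y assume "x \<in> Old -` X" "y \<in> P" "le x y"
    then show "y \<in> Old -` X" using up[of "Old x" "Old y"] unfolding P2_def by auto
  qed
  moreover have "X1 \<in> X \<longrightarrow> X2 \<in> X" using up[of X1 X2] unfolding P2_def by auto
  moreover have "X2 \<in> X \<longrightarrow> hi \<subseteq> Old -` X"
  proof (intro impI subsetI)
    fix b assume "X2 \<in> X" "b \<in> hi"
    moreover then have "b \<in> P" using hiP by auto
    ultimately show "b \<in> Old -` X" using up[of X2 "Old b"] unfolding P2_def by auto
  qed
  moreover have "X1 \<notin> X \<longrightarrow> Old -` X \<subseteq> lo"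
  proof (intro impI subsetI)
    fix a assume "X1 \<notin> X" "a \<in> Old -` X"
    moreover then have "a \<in> P" using GP by auto
    ultimately show "a \<in> lo" using up[of "Old a" X1] unfolding P2_def by auto
  qed
  ultimately show ?r using XP by blast
next
  assume R: ?r
  then have XP: "X \<subseteq> P2 P" and GL: "Old -` X \<in> L" and c1: "X1 \<in> X \<longrightarrow> X2 \<in> X"
    and c2: "X2 \<in> X \<longrightarrow> hi \<subseteq> Old -` X" and c3: "X1 \<notin> X \<longrightarrow> Old -` X \<subseteq> lo" by auto
  have up: "\<And>a b. a \<in> Old -` X \<Longrightarrow> b \<in> P \<Longrightarrow> le a b \<Longrightarrow> b \<in> Old -` X"
    using GL unfolding filters_def by blast
  show ?l unfolding filters_def
  proof (intro CollectI conjI ballI impI)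
    show "X \<subseteq> P2 P" by (rule XP)
    fix x y assume x: "x \<in> X" and y: "y \<in> P2 P" and xy: "le2 P le lo hi x y"
    show "y \<in> X"
    proof (cases y)
      case (Old b)
      then have bP: "b \<in> P" using y unfolding P2_def by auto
      show ?thesis
      proof (cases x)
        case (Old a)
        then show ?thesis using up[of a b] x xy bP \<open>y = Old b\<close> by auto
      next
        case X1
        then have "b \<in> hi" using xy \<open>y = Old b\<close> bP by auto
        then show ?thesis using c1 c2 x X1 \<open>y = Old b\<close> by auto
      next
        case X2
        then have "b \<in> hi" using xy \<open>y = Old b\<close> bP by auto
        then show ?thesis using c2 x X2 \<open>y = Old b\<close> by auto
      qed
    next
      case X1
      show ?thesis
      proof (cases x)
        case (Old a)
        then have "a \<in> P" using x XP unfolding P2_def by auto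
        then have "a \<notin> lo" using xy Old X1 by auto
        then show ?thesis using c3 x Old X1 by auto
      next
        case X1 then show ?thesis using x \<open>y = X1\<close> by simp
      next
        case X2 then show ?thesis using xy \<open>y = X1\<close> by simp
      qed
    next
      case X2
      show ?thesis
      proof (cases x)
        case (Old a)
        then have "a \<in> P" using x XP unfolding P2_def by auto
        then have "a \<notin> lo" using xy Old X2 by auto
        then show ?thesis using c3 c1 x Old X2 by auto
      next
        case X1 then show ?thesis using x c1 \<open>y = X2\<close> by simp
      next
        case X2 then show ?thesis using x \<open>y = X2\<close> by simp
      qed
    qed
  qed
qed

lemma Old_vimage[simp]: "Old -` (Old ` G) = G" by auto
lemma Old_vimage2[simp]: "Old -` (insert X2 (Old ` G)) = G" by auto
lemma Old_vimage3[simp]: "Old -` (insert X1 (insert X2 (Old ` G))) = G" by auto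
lemma Old_vimage4[simp]: "Old -` (insert X1 (Old ` G)) = G" by auto

lemma GL_P: "G \<in> L \<Longrightarrow> G \<subseteq> P" unfolding filters_def by auto

lemma L2_1: "Old ` G \<in> L2 \<longleftrightarrow> G \<in> A"
  unfolding L2_char using GL_P[of G] by (auto simp: P2_def)
lemma L2_2: "insert X2 (Old ` G) \<in> L2 \<longleftrightarrow> G \<in> K"
  unfolding L2_char K_eq using GL_P[of G] by (auto simp: P2_def)
lemma L2_X1: "insert X1 (Old ` G) \<notin> L2"
  unfolding L2_char by auto
lemma L2_3: "insert X1 (insert X2 (Old ` G)) \<in> L2 \<longleftrightarrow> G \<in> B"
  unfolding L2_char using GL_P[of G] by (auto simp: P2_def)

end

definition remf :: "'a set set \<Rightarrow> 'a set \<Rightarrow> 'a set" where "remf M F = {f\<in>F. F - {f} \<in> M}"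
definition addf :: "'a set \<Rightarrow> 'a set set \<Rightarrow> 'a set \<Rightarrow> 'a set" where "addf Q M F = {p\<in>Q - F. insert p F \<in> M}"

lemma Some_diff[simp]: "Some ` F - {Some f} = Some ` (F - {f})" by auto
lemma Some_ins: "insert (Some p) (Some ` F) = Some ` (insert p F)" by auto
lemma None_diff[simp]: "insert None (Some ` F) - {Some f} = insert None (Some ` (F - {f}))" by auto
lemma None_diff2[simp]: "insert None (Some ` F) - {None} = Some ` F" by auto
lemma None_ins: "insert (Some p) (insert None (Some ` F)) = insert None (Some ` (insert p F))" by auto

lemma Old_diff[simp]: "Old ` F - {Old f} = Old ` (F - {f})" by auto
lemma Old_ins: "insert (Old p) (Old ` F) = Old ` (insert p F)" by auto
lemma X2_diff[simp]: "insert X2 (Old ` F) - {Old f} = insert X2 (Old ` (F - {f}))" by auto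
lemma X2_diff2[simp]: "insert X2 (Old ` F) - {X2} = Old ` F" by auto
lemma X2_ins: "insert (Old p) (insert X2 (Old ` F)) = insert X2 (Old ` (insert p F))" by auto
lemma X12_diff[simp]: "insert X1 (insert X2 (Old ` F)) - {Old f} = insert X1 (insert X2 (Old ` (F - {f})))" by auto
lemma X12_diff1[simp]: "insert X1 (insert X2 (Old ` F)) - {X1} = insert X2 (Old ` F)" by auto
lemma X12_diff2[simp]: "insert X1 (insert X2 (Old ` F)) - {X2} = insert X1 (Old ` F)" by auto
lemma X12_ins: "insert (Old p) (insert X1 (insert X2 (Old ` F))) = insert X1 (insert X2 (Old ` (insert p F)))" by auto

lemma ext2_split: "X = Old ` (Old -` X) \<union> (X \<inter> {X1, X2})"
proof (rule set_eqI)
  fix x show "x \<in> X \<longleftrightarrow> x \<in> Old ` (Old -` X) \<union> (X \<inter> {X1, X2})" by (cases x) auto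
qed

context cutset begin

lemma L2_decomp: "L2 = (\<lambda>G. Old ` G) ` A \<union> (\<lambda>G. insert X2 (Old ` G)) ` K \<union> (\<lambda>G. insert X1 (insert X2 (Old ` G))) ` B"
proof
  show "(\<lambda>G. Old ` G) ` A \<union> (\<lambda>G. insert X2 (Old ` G)) ` K \<union> (\<lambda>G. insert X1 (insert X2 (Old ` G))) ` B \<subseteq> L2"
    using L2_1 L2_2 L2_3 by auto
  show "L2 \<subseteq> (\<lambda>G. Old ` G) ` A \<union> (\<lambda>G. insert X2 (Old ` G)) ` K \<union> (\<lambda>G. insert X1 (insert X2 (Old ` G))) ` B"
  proof
    fix X assume X: "X \<in> L2"
    let ?G = "Old -` X"
    have c: "X1 \<in> X \<longrightarrow> X2 \<in> X" using X L2_char by blast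
    have sp: "X = Old ` ?G \<union> (X \<inter> {X1, X2})" by (rule ext2_split)
    show "X \<in> (\<lambda>G. Old ` G) ` A \<union> (\<lambda>G. insert X2 (Old ` G)) ` K \<union> (\<lambda>G. insert X1 (insert X2 (Old ` G))) ` B"
    proof (cases "X1 \<in> X")
      case True
      then have eq: "X = insert X1 (insert X2 (Old ` ?G))" using c sp by auto
      have "insert X1 (insert X2 (Old ` ?G)) \<in> L2" using X eq by simp
      then have "?G \<in> B" by (rule L2_3[THEN iffD1])
      then have "X \<in> (\<lambda>G. insert X1 (insert X2 (Old ` G))) ` B" using eq by (rule image_eqI[rotated])
      then show ?thesis by (rule UnI2)
    next
      case False
      show ?thesis
      proof (cases "X2 \<in> X")
        case True
        then have eq: "X = insert X2 (Old ` ?G)" using False sp by auto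
        have "insert X2 (Old ` ?G) \<in> L2" using X eq by simp
        then have "?G \<in> K" by (rule L2_2[THEN iffD1])
        then have "X \<in> (\<lambda>G. insert X2 (Old ` G)) ` K" using eq by (rule image_eqI[rotated])
        then show ?thesis by blast
      next
        case False2: False
        then have eq: "X = Old ` ?G" using False sp by auto
        have "Old ` ?G \<in> L2" using X eq by simp
        then have "?G \<in> A" by (rule L2_1[THEN iffD1])
        then have "X \<in> (\<lambda>G. Old ` G) ` A" using eq by (rule image_eqI[rotated])
        then show ?thesis by blast
      qed
    qed
  qed
qed

end
lemma PK_mem[simp]: "Some p \<in> PK P \<longleftrightarrow> p \<in> P" "None \<in> PK P" unfolding PK_def by auto
lemma P2_mem[simp]: "Old p \<in> P2 P \<longleftrightarrow> p \<in> P" "X1 \<in> P2 P" "X2 \<in> P2 P" unfolding P2_def by auto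

context cutset begin

lemma eqLK_a: "F \<in> A \<Longrightarrow> {m\<in>Some ` F. Some ` F - {m} \<in> LK} = Some ` (remf A F)"
  by (auto simp: remf_def LK_Some)

lemma eqLK_b: "F \<in> A \<Longrightarrow> {m\<in>PK P - Some ` F. insert m (Some ` F) \<in> LK} = Some ` (addf P A F) \<union> (if hi \<subseteq> F then {None} else {})"
proof (rule set_eqI)
  fix m assume F: "F \<in> A"
  show "m \<in> {m\<in>PK P - Some ` F. insert m (Some ` F) \<in> LK} \<longleftrightarrow> m \<in> Some ` (addf P A F) \<union> (if hi \<subseteq> F then {None} else {})"
  proof (cases m)
    case None then show ?thesis using F by (auto simp: LK_None)
  next
    case (Some p) then show ?thesis using F by (auto simp: LK_Some addf_def Some_ins simp del: image_insert)
  qed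
qed

lemma eqLK_c: "F \<in> B \<Longrightarrow> {m\<in>insert None (Some ` F). insert None (Some ` F) - {m} \<in> LK} = Some ` (remf B F) \<union> (if F \<subseteq> lo then {None} else {})"
proof (rule set_eqI)
  fix m assume F: "F \<in> B"
  show "m \<in> {m\<in>insert None (Some ` F). insert None (Some ` F) - {m} \<in> LK} \<longleftrightarrow> m \<in> Some ` (remf B F) \<union> (if F \<subseteq> lo then {None} else {})"
  proof (cases m)
    case None then show ?thesis using F by (auto simp: LK_Some)
  next
    case (Some p) then show ?thesis using F by (auto simp: LK_None remf_def)
  qed
qed

lemma eqLK_d: "F \<in> B \<Longrightarrow> {m\<in>PK P - insert None (Some ` F). insert m (insert None (Some ` F)) \<in> LK} = Some ` (addf P B F)"
proof (rule set_eqI)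
  fix m assume F: "F \<in> B"
  show "m \<in> {m\<in>PK P - insert None (Some ` F). insert m (insert None (Some ` F)) \<in> LK} \<longleftrightarrow> m \<in> Some ` (addf P B F)"
  proof (cases m)
    case None then show ?thesis by auto
  next
    case (Some p) then show ?thesis using F by (auto simp: LK_None addf_def None_ins simp del: image_insert)
  qed
qed

lemma eq2_a: "F \<in> A \<Longrightarrow> {m\<in>Old ` F. Old ` F - {m} \<in> L2} = Old ` (remf A F)"
  by (auto simp: remf_def L2_1)

lemma eq2_b: "F \<in> A \<Longrightarrow> {m\<in>P2 P - Old ` F. insert m (Old ` F) \<in> L2} = Old ` (addf P A F) \<union> (if hi \<subseteq> F then {X2} else {})"
proof (rule set_eqI)
  fix m assume F: "F \<in> A"
  show "m \<in> {m\<in>P2 P - Old ` F. insert m (Old ` F) \<in> L2} \<longleftrightarrow> m \<in> Old ` (addf P A F) \<union> (if hi \<subseteq> F then {X2} else {})"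
  proof (cases m)
    case X1 then show ?thesis using L2_X1 by auto
  next
    case X2 then show ?thesis using F by (auto simp: L2_2 K_eq)
  next
    case (Old p) then show ?thesis using F by (auto simp: L2_1 addf_def Old_ins simp del: image_insert)
  qed
qed

lemma eq2_c: "F \<in> B \<Longrightarrow> {m\<in>insert X1 (insert X2 (Old ` F)). insert X1 (insert X2 (Old ` F)) - {m} \<in> L2} = Old ` (remf B F) \<union> (if F \<subseteq> lo then {X1} else {})"
proof (rule set_eqI)
  fix m assume F: "F \<in> B"
  show "m \<in> {m\<in>insert X1 (insert X2 (Old ` F)). insert X1 (insert X2 (Old ` F)) - {m} \<in> L2} \<longleftrightarrow> m \<in> Old ` (remf B F) \<union> (if F \<subseteq> lo then {X1} else {})"
  proof (cases m)
    case X1 then show ?thesis using F by (auto simp: L2_2 K_eq)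
  next
    case X2 then show ?thesis using L2_X1 by auto
  next
    case (Old p) then show ?thesis using F by (auto simp: L2_3 remf_def)
  qed
qed

lemma eq2_d: "F \<in> B \<Longrightarrow> {m\<in>P2 P - insert X1 (insert X2 (Old ` F)). insert m (insert X1 (insert X2 (Old ` F))) \<in> L2} = Old ` (addf P B F)"
proof (rule set_eqI)
  fix m assume F: "F \<in> B"
  show "m \<in> {m\<in>P2 P - insert X1 (insert X2 (Old ` F)). insert m (insert X1 (insert X2 (Old ` F))) \<in> L2} \<longleftrightarrow> m \<in> Old ` (addf P B F)"
  proof (cases m)
    case (Old p) then show ?thesis using F by (auto simp: L2_3 addf_def X12_ins simp del: image_insert)
  qed auto
qed

lemma eq2_e: "F \<in> K \<Longrightarrow> {m\<in>insert X2 (Old ` F). insert X2 (Old ` F) - {m} \<in> L2} = Old ` (remf K F) \<union> {X2}"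
proof (rule set_eqI)
  fix m assume F: "F \<in> K"
  show "m \<in> {m\<in>insert X2 (Old ` F). insert X2 (Old ` F) - {m} \<in> L2} \<longleftrightarrow> m \<in> Old ` (remf K F) \<union> {X2}"
  proof (cases m)
    case X2 then show ?thesis using F by (auto simp: L2_1 K_eq)
  next
    case (Old p) then show ?thesis using F by (auto simp: L2_2 remf_def)
  qed auto
qed

lemma eq2_f: "F \<in> K \<Longrightarrow> {m\<in>P2 P - insert X2 (Old ` F). insert m (insert X2 (Old ` F)) \<in> L2} = Old ` (addf P K F) \<union> {X1}"
proof (rule set_eqI)
  fix m assume F: "F \<in> K"
  show "m \<in> {m\<in>P2 P - insert X2 (Old ` F). insert m (insert X2 (Old ` F)) \<in> L2} \<longleftrightarrow> m \<in> Old ` (addf P K F) \<union> {X1}"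
  proof (cases m)
    case X1 then show ?thesis using F by (auto simp: L2_3 K_eq insert_commute)
  next
    case (Old p) then show ?thesis using F by (auto simp: L2_2 addf_def X2_ins simp del: image_insert)
  qed auto
qed

end

lemma card_ins_opt:
  assumes "inj f" "finite S" "x \<notin> f ` S"
  shows "card (f ` S \<union> (if c then {x} else {})) = card S + (if c then 1 else 0)"
proof -
  have "card (f ` S) = card S" using assms(1) by (simp add: card_image inj_on_subset)
  then show ?thesis using assms by (cases c) auto
qed

lemma inj_Old[simp]: "inj Old" by (rule injI) simp
lemma inj_on_Old[simp]: "inj_on Old S" by (simp add: inj_on_def)

lemma cv_full: "convex_fam Q R (filters Q R)" unfolding convex_fam_def by blast

context cutset begin

lemma finPK: "finite (PK P)" unfolding PK_def using finP by simp
lemma finP2: "finite (P2 P)" unfolding P2_def using finP by simp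
lemma finF: "F \<in> L \<Longrightarrow> finite F" using finP GL_P finite_subset by blast
lemma finL: "finite L" using finP unfolding filters_def by (simp add: finite_subset[of _ "Pow P"])

lemma cv_K: "convex_fam P le K"
  unfolding convex_fam_def interval_F_def rev_incl_def by blast

lemma fin_remf: "F \<in> L \<Longrightarrow> finite (remf M F)" unfolding remf_def using finF by simp
lemma fin_addf: "finite (addf P M F)" unfolding addf_def using finP by simp

lemma deg_LK_A: assumes F: "F \<in> A"
  shows "deg LK rev_incl (Some ` F) = card (remf A F) + card (addf P A F) + (if hi \<subseteq> F then 1 else 0)"
proof -
  have mem: "Some ` F \<in> LK" using F LK_Some by blast
  have "deg_minus LK rev_incl (Some ` F) = card (Some ` (remf A F))"
    using deg_minus_char[OF finPK po_K cv_full mem] eqLK_a[OF F] by simp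
  also have "\<dots> = card (remf A F)" by (simp add: card_image)
  finally have 1: "deg_minus LK rev_incl (Some ` F) = card (remf A F)" .
  have "deg_plus LK rev_incl (Some ` F) = card (Some ` (addf P A F) \<union> (if hi \<subseteq> F then {None} else {}))"
    using deg_plus_char[OF finPK po_K cv_full mem] eqLK_b[OF F] by simp
  also have "\<dots> = card (addf P A F) + (if hi \<subseteq> F then 1 else 0)"
    by (rule card_ins_opt) (auto simp: fin_addf)
  finally show ?thesis using 1 unfolding deg_def by simp
qed

lemma deg_L2_A: assumes F: "F \<in> A"
  shows "deg L2 rev_incl (Old ` F) = card (remf A F) + card (addf P A F) + (if hi \<subseteq> F then 1 else 0)"
proof -
  have mem: "Old ` F \<in> L2" using F L2_1 by blast
  have "deg_minus L2 rev_incl (Old ` F) = card (Old ` (remf A F))"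
    using deg_minus_char[OF finP2 po_2 cv_full mem] eq2_a[OF F] by simp
  also have "\<dots> = card (remf A F)" by (simp add: card_image)
  finally have 1: "deg_minus L2 rev_incl (Old ` F) = card (remf A F)" .
  have "deg_plus L2 rev_incl (Old ` F) = card (Old ` (addf P A F) \<union> (if hi \<subseteq> F then {X2} else {}))"
    using deg_plus_char[OF finP2 po_2 cv_full mem] eq2_b[OF F] by simp
  also have "\<dots> = card (addf P A F) + (if hi \<subseteq> F then 1 else 0)"
    by (rule card_ins_opt) (auto simp: fin_addf)
  finally show ?thesis using 1 unfolding deg_def by simp
qed

lemma deg_LK_B: assumes F: "F \<in> B"
  shows "deg_minus LK rev_incl (insert None (Some ` F)) = card (remf B F) + (if F \<subseteq> lo then 1 else 0)"
    and "deg LK rev_incl (insert None (Some ` F)) = card (remf B F) + (if F \<subseteq> lo then 1 else 0) + card (addf P B F)"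
proof -
  have mem: "insert None (Some ` F) \<in> LK" using F LK_None by blast
  have "deg_minus LK rev_incl (insert None (Some ` F)) = card (Some ` (remf B F) \<union> (if F \<subseteq> lo then {None} else {}))"
    using deg_minus_char[OF finPK po_K cv_full mem] eqLK_c[OF F] by simp
  also have "\<dots> = card (remf B F) + (if F \<subseteq> lo then 1 else 0)"
    by (rule card_ins_opt) (use F in \<open>auto simp: fin_remf\<close>)
  finally show 1: "deg_minus LK rev_incl (insert None (Some ` F)) = card (remf B F) + (if F \<subseteq> lo then 1 else 0)" .
  have "deg_plus LK rev_incl (insert None (Some ` F)) = card (Some ` (addf P B F))"
    using deg_plus_char[OF finPK po_K cv_full mem] eqLK_d[OF F] by simp
  also have "\<dots> = card (addf P B F)" by (simp add: card_image)
  finally show "deg LK rev_incl (insert None (Some ` F)) = card (remf B F) + (if F \<subseteq> lo then 1 else 0) + card (addf P B F)"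
    using 1 unfolding deg_def by simp
qed

lemma deg_L2_B: assumes F: "F \<in> B"
  shows "deg L2 rev_incl (insert X1 (insert X2 (Old ` F))) = card (remf B F) + (if F \<subseteq> lo then 1 else 0) + card (addf P B F)"
proof -
  have mem: "insert X1 (insert X2 (Old ` F)) \<in> L2" using F L2_3 by blast
  have "deg_minus L2 rev_incl (insert X1 (insert X2 (Old ` F))) = card (Old ` (remf B F) \<union> (if F \<subseteq> lo then {X1} else {}))"
    using deg_minus_char[OF finP2 po_2 cv_full mem] eq2_c[OF F] by simp
  also have "\<dots> = card (remf B F) + (if F \<subseteq> lo then 1 else 0)"
    by (rule card_ins_opt) (use F in \<open>auto simp: fin_remf\<close>)
  finally have 1: "deg_minus L2 rev_incl (insert X1 (insert X2 (Old ` F))) = card (remf B F) + (if F \<subseteq> lo then 1 else 0)" .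
  have "deg_plus L2 rev_incl (insert X1 (insert X2 (Old ` F))) = card (Old ` (addf P B F))"
    using deg_plus_char[OF finP2 po_2 cv_full mem] eq2_d[OF F] by simp
  also have "\<dots> = card (addf P B F)" by (simp add: card_image)
  finally show ?thesis using 1 unfolding deg_def by simp
qed

lemma deg_L2_K: assumes F: "F \<in> K"
  shows "deg L2 rev_incl (insert X2 (Old ` F)) = card (remf K F) + card (addf P K F) + 2"
proof -
  have FL: "F \<in> L" using F K_eq by blast
  have mem: "insert X2 (Old ` F) \<in> L2" using F L2_2 by blast
  have "deg_minus L2 rev_incl (insert X2 (Old ` F)) = card (Old ` (remf K F) \<union> (if True then {X2} else {}))"
    using deg_minus_char[OF finP2 po_2 cv_full mem] eq2_e[OF F] by simp
  also have "\<dots> = card (remf K F) + 1"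
    using card_ins_opt[OF inj_Old fin_remf[OF FL, of K], of X2 True] by auto
  finally have 1: "deg_minus L2 rev_incl (insert X2 (Old ` F)) = card (remf K F) + 1" .
  have "deg_plus L2 rev_incl (insert X2 (Old ` F)) = card (Old ` (addf P K F) \<union> (if True then {X1} else {}))"
    using deg_plus_char[OF finP2 po_2 cv_full mem] eq2_f[OF F] by simp
  also have "\<dots> = card (addf P K F) + 1"
    using card_ins_opt[OF inj_Old fin_addf[of K F], of X1 True] by auto
  finally show ?thesis using 1 unfolding deg_def by simp
qed

lemma deg_K: assumes F: "F \<in> K"
  shows "deg_minus K rev_incl F = card (remf K F)"
    and "deg K rev_incl F = card (remf K F) + card (addf P K F)"
proof -
  show 1: "deg_minus K rev_incl F = card (remf K F)"
    using deg_minus_char[OF finP po cv_K F] unfolding remf_def by simp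
  have "deg_plus K rev_incl F = card (addf P K F)"
    using deg_plus_char[OF finP po cv_K F] unfolding addf_def by simp
  then show "deg K rev_incl F = card (remf K F) + card (addf P K F)" using 1 unfolding deg_def by simp
qed

lemma dm_L: "F \<in> L \<Longrightarrow> deg_minus L rev_incl F = card (remf L F)"
  using deg_minus_char[OF finP po cv_full] unfolding remf_def by blast

lemma remf_LA: "F \<in> A \<Longrightarrow> remf L F = remf A F" unfolding remf_def by auto
lemma remf_BK: "F \<in> K \<Longrightarrow> remf B F = remf K F" unfolding remf_def K_eq by auto

lemma remf_LB: assumes F: "F \<in> B" and nlo: "\<not> F \<subseteq> lo" shows "remf L F = remf B F"
proof -
  obtain z where z: "z \<in> F" "z \<notin> lo" using nlo by blast
  have FP: "F \<subseteq> P" using F GL_P by blast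
  have "\<And>f. f \<in> F \<Longrightarrow> F - {f} \<in> L \<Longrightarrow> f \<notin> hi"
  proof
    fix f assume f: "f \<in> F" "F - {f} \<in> L" "f \<in> hi"
    have "le z f" using cut_fact z f(3) FP by blast
    moreover have "z \<in> F - {f}" using z f(3) hi_lo by blast
    moreover have "f \<in> P" using f FP by blast
    ultimately have "f \<in> F - {f}" using f(2) unfolding filters_def by blast
    then show False by blast
  qed
  then show ?thesis unfolding remf_def using F by blast
qed

end

lemma card_filter_Un: "finite S \<Longrightarrow> finite T \<Longrightarrow> S \<inter> T = {} \<Longrightarrow>
  card {a\<in>S \<union> T. Q a} = card {a\<in>S. Q a} + card {a\<in>T. Q a}"
proof -
  assume a: "finite S" "finite T" "S \<inter> T = {}"
  have "{a\<in>S \<union> T. Q a} = {a\<in>S. Q a} \<union> {a\<in>T. Q a}" by blast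
  moreover have "card ({a\<in>S. Q a} \<union> {a\<in>T. Q a}) = card {a\<in>S. Q a} + card {a\<in>T. Q a}"
    by (rule card_Un_disjoint) (use a in auto)
  ultimately show ?thesis by simp
qed

lemma card_filter_img: "inj_on f X \<Longrightarrow> card {a\<in>f ` X. Q a} = card {x\<in>X. Q (f x)}"
proof -
  assume i: "inj_on f X"
  have "{a\<in>f ` X. Q a} = f ` {x\<in>X. Q (f x)}" by blast
  moreover have "inj_on f {x\<in>X. Q (f x)}" using i by (rule inj_on_subset) blast
  ultimately show ?thesis by (simp add: card_image)
qed

lemma Some_vimage1: "Some -` (Some ` G) = G" by auto
lemma Some_vimage2: "Some -` (insert None (Some ` G)) = G" by auto

lemma inj1: "inj_on (\<lambda>G. Some ` G) X" by (rule inj_onI) (metis Some_vimage1)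
lemma inj2: "inj_on (\<lambda>G. insert None (Some ` G)) X" by (rule inj_onI) (metis Some_vimage2)
lemma Old_vimage1': "Old -` (Old ` G) = G" by auto
lemma Old_vimage2': "Old -` (insert X2 (Old ` G)) = G" by auto
lemma Old_vimage3': "Old -` (insert X1 (insert X2 (Old ` G))) = G" by auto

lemma inj3: "inj_on (\<lambda>G. Old ` G) X" by (rule inj_onI) (metis Old_vimage1')
lemma inj4: "inj_on (\<lambda>G. insert X2 (Old ` G)) X" by (rule inj_onI) (metis Old_vimage2')
lemma inj5: "inj_on (\<lambda>G. insert X1 (insert X2 (Old ` G))) X" by (rule inj_onI) (metis Old_vimage3')

context cutset begin

lemma dm_LK_A: assumes F: "F \<in> A"
  shows "deg_minus LK rev_incl (Some ` F) = card (remf A F)"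
proof -
  have mem: "Some ` F \<in> LK" using F LK_Some by blast
  have "deg_minus LK rev_incl (Some ` F) = card (Some ` (remf A F))"
    using deg_minus_char[OF finPK po_K cv_full mem] eqLK_a[OF F] by simp
  also have "\<dots> = card (remf A F)" by (simp add: card_image)
  finally show ?thesis .
qed

lemma finA: "finite A" using finL by simp
lemma finB: "finite B" using finL by simp
lemma finK: "finite K" using finL K_eq by simp

lemma part1: "d_num L2 rev_incl k = d_num LK rev_incl k + d_num K rev_incl (k - 2)"
proof -
  let ?f = "\<lambda>G. Old ` G" and ?g = "\<lambda>G. insert X2 (Old ` G)" and ?h = "\<lambda>G. insert X1 (insert X2 (Old ` G))"
  let ?s = "\<lambda>G. Some ` G" and ?n = "\<lambda>G. insert None (Some ` G)"
  let ?Q2 = "\<lambda>a. int (deg L2 rev_incl a) = k" and ?QK = "\<lambda>a. int (deg LK rev_incl a) = k"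
  have "d_num L2 rev_incl k = card {a\<in>?f ` A \<union> ?g ` K \<union> ?h ` B. ?Q2 a}"
    unfolding d_num_def using L2_decomp by simp
  also have "\<dots> = card {a\<in>?f ` A \<union> ?g ` K. ?Q2 a} + card {a\<in>?h ` B. ?Q2 a}"
    by (rule card_filter_Un) (auto simp: finA finB finK)
  also have "card {a\<in>?f ` A \<union> ?g ` K. ?Q2 a} = card {a\<in>?f ` A. ?Q2 a} + card {a\<in>?g ` K. ?Q2 a}"
    by (rule card_filter_Un) (auto simp: finA finB finK)
  also have "card {a\<in>?f ` A. ?Q2 a} = card {F\<in>A. ?Q2 (?f F)}" by (rule card_filter_img[OF inj3])
  also have "card {a\<in>?g ` K. ?Q2 a} = card {F\<in>K. ?Q2 (?g F)}" by (rule card_filter_img[OF inj4])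
  also have "card {a\<in>?h ` B. ?Q2 a} = card {F\<in>B. ?Q2 (?h F)}" by (rule card_filter_img[OF inj5])
  also have "{F\<in>A. ?Q2 (?f F)} = {F\<in>A. ?QK (?s F)}"
    using deg_L2_A deg_LK_A by (intro Collect_cong) auto
  also have "{F\<in>K. ?Q2 (?g F)} = {F\<in>K. int (deg K rev_incl F) = k - 2}"
    using deg_L2_K deg_K(2) by (intro Collect_cong) auto
  also have "{F\<in>B. ?Q2 (?h F)} = {F\<in>B. ?QK (?n F)}"
    using deg_L2_B deg_LK_B(2) by (intro Collect_cong) auto
  finally have 1: "d_num L2 rev_incl k = card {F\<in>A. ?QK (?s F)} + card {F\<in>K. int (deg K rev_incl F) = k - 2} + card {F\<in>B. ?QK (?n F)}" .
  have "d_num LK rev_incl k = card {a\<in>?s ` A \<union> ?n ` B. ?QK a}"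
    unfolding d_num_def using LK_decomp by simp
  also have "\<dots> = card {a\<in>?s ` A. ?QK a} + card {a\<in>?n ` B. ?QK a}"
    by (rule card_filter_Un) (auto simp: finA finB)
  also have "card {a\<in>?s ` A. ?QK a} = card {F\<in>A. ?QK (?s F)}" by (rule card_filter_img[OF inj1])
  also have "card {a\<in>?n ` B. ?QK a} = card {F\<in>B. ?QK (?n F)}" by (rule card_filter_img[OF inj2])
  finally have 2: "d_num LK rev_incl k = card {F\<in>A. ?QK (?s F)} + card {F\<in>B. ?QK (?n F)}" .
  have 3: "d_num K rev_incl (k - 2) = card {F\<in>K. int (deg K rev_incl F) = k - 2}" by (simp add: d_num_def)
  show ?thesis using 1 2 3 by simp
qed

lemma part2: "d_minus_num LK rev_incl k = d_minus_num L rev_incl k + d_minus_num K rev_incl (k - 1)"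
proof -
  let ?s = "\<lambda>G. Some ` G" and ?n = "\<lambda>G. insert None (Some ` G)"
  let ?QK = "\<lambda>a. int (deg_minus LK rev_incl a) = k" and ?QL = "\<lambda>F. int (deg_minus L rev_incl F) = k"
  have BA: "B = (B - A) \<union> K" using K_eq by blast
  have LA: "L = A \<union> (B - A)" using L_split by blast
  have "d_minus_num LK rev_incl k = card {a\<in>?s ` A \<union> ?n ` B. ?QK a}"
    unfolding d_minus_num_def using LK_decomp by simp
  also have "\<dots> = card {a\<in>?s ` A. ?QK a} + card {a\<in>?n ` B. ?QK a}"
    by (rule card_filter_Un) (auto simp: finA finB)
  also have "card {a\<in>?s ` A. ?QK a} = card {F\<in>A. ?QK (?s F)}" by (rule card_filter_img[OF inj1])
  also have "card {a\<in>?n ` B. ?QK a} = card {F\<in>B. ?QK (?n F)}" by (rule card_filter_img[OF inj2])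
  also have "card {F\<in>B. ?QK (?n F)} = card {F\<in>(B - A) \<union> K. ?QK (?n F)}" using BA by simp
  also have "\<dots> = card {F\<in>B - A. ?QK (?n F)} + card {F\<in>K. ?QK (?n F)}"
    by (rule card_filter_Un) (auto simp: finB finK K_eq)
  also have "{F\<in>A. ?QK (?s F)} = {F\<in>A. ?QL F}"
    using dm_LK_A dm_L remf_LA by (intro Collect_cong) auto
  also have "{F\<in>B - A. ?QK (?n F)} = {F\<in>B - A. ?QL F}"
  proof -
    have key: "?QK (?n F) = ?QL F" if "F \<in> B - A" for F
    proof -
      have F: "F \<in> B" "\<not> F \<subseteq> lo" using that by auto
      then show ?thesis using deg_LK_B(1)[OF F(1)] dm_L remf_LB[OF F] by auto
    qed
    then show ?thesis by blast
  qed
  also have "{F\<in>K. ?QK (?n F)} = {F\<in>K. int (deg_minus K rev_incl F) = k - 1}"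
  proof -
    have key: "?QK (?n F) = (int (deg_minus K rev_incl F) = k - 1)" if F: "F \<in> K" for F
    proof -
      have FB: "F \<in> B" and Flo: "F \<subseteq> lo" using F K_eq by auto
      show ?thesis using deg_LK_B(1)[OF FB] Flo deg_K(1)[OF F] remf_BK[OF F] by auto
    qed
    then show ?thesis by blast
  qed
  finally have 1: "d_minus_num LK rev_incl k = card {F\<in>A. ?QL F} + (card {F\<in>B - A. ?QL F} + card {F\<in>K. int (deg_minus K rev_incl F) = k - 1})" .
  have "d_minus_num L rev_incl k = card {F\<in>A \<union> (B - A). ?QL F}"
    unfolding d_minus_num_def using LA by simp
  also have "\<dots> = card {F\<in>A. ?QL F} + card {F\<in>B - A. ?QL F}"
    by (rule card_filter_Un) (auto simp: finA finB)
  finally have 2: "d_minus_num L rev_incl k = card {F\<in>A. ?QL F} + card {F\<in>B - A. ?QL F}" .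
  have 3: "d_minus_num K rev_incl (k - 1) = card {F\<in>K. int (deg_minus K rev_incl F) = k - 1}"
    by (simp add: d_minus_num_def)
  show ?thesis using 1 2 3 by simp
qed

end

theorem theorem5:
  fixes P :: "'a set" and le :: "'a \<Rightarrow> 'a \<Rightarrow> bool" and lo hi :: "'a set" and k :: int
  assumes "finite P"
    and "partial_order_on' P le"
    and "cutting P le lo hi"
  shows "d_num (filters (P2 P) (le2 P le lo hi)) rev_incl k =
           d_num (filters (PK P) (leK P le lo hi)) rev_incl k
           + d_num (interval_F P le lo hi) rev_incl (k - 2)
       \<and> d_minus_num (filters (PK P) (leK P le lo hi)) rev_incl k =
           d_minus_num (filters P le) rev_incl k
           + d_minus_num (interval_F P le lo hi) rev_incl (k - 1)"
proof -
  interpret cutset P le lo hi using assms by unfold_locales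
  show ?thesis using part1 part2 by blast
qed

end
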